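(* Let $\mathcal{H}$ be a real Hilbert space and let $\phi:\mathcal{H}\to(-\infty,+\infty]$ be a function such that $\phi+\tfrac12\|\cdot\|^2\in\Gamma_0(\mathcal{H})$. Then for every $\delta>0$, the proximity operator of the $(\delta+1)^{-1}$-weakly convex function $\phi/(\delta+1)$ is single-valued and $$\mathrm{s\text{-}Prox}_{\phi/(\delta+1)}=\big[\mathbf{Prox}_{\phi}^{-1}+\delta\,\mathrm{Id}\big]^{-1}\circ(\delta+1)\mathrm{Id}.$$
   Context: $\Gamma_0(\mathcal{H})$ is the set of proper lower semicontinuous convex functions $\mathcal{H}\to(-\infty,+\infty]$. $\mathrm{Id}$ is the identity on $\mathcal{H}$. For a proper function $g$ and $\gamma>0$, $\mathbf{Prox}_{\gamma g}:\mathcal{H}\to2^{\mathcal{H}}$, $x\mapsto\operatorname{argmin}_{y\in\mathcal{H}}\big(g(y)+\frac{1}{2\gamma}\|x-y\|^2\big)$; when this set is a singleton for every $x$, the resulting single-valued map $\mathcal{H}\to\mathcal{H}$ is denoted $\mathrm{s\text{-}Prox}_{\gamma g}$. The inverse of a set-valued operator $\mathsf{T}$ is $\mathsf{T}^{-1}(y)=\{x\in\mathcal{H}: y\in\mathsf{T}(x)\}$, and the sum of set-valued operators is $(\mathsf{T}+\delta\mathrm{Id})(x)=\{u+\delta x: u\in\mathsf{T}(x)\}$. *)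

theory Defs
  imports "HOL-Analysis.Analysis" "HOL-Library.Extended_Real"
begin

definition proper_fun :: "('a \<Rightarrow> ereal) \<Rightarrow> bool" where
  "proper_fun f \<longleftrightarrow> (\<forall>x. f x \<noteq> -\<infinity>) \<and> (\<exists>x. f x \<noteq> \<infinity>)"

definition econvex :: "('a::real_vector \<Rightarrow> ereal) \<Rightarrow> bool" where
  "econvex f \<longleftrightarrow> (\<forall>x y t. 0 \<le> t \<and> t \<le> 1 \<longrightarrow>
      f ((1 - t) *\<^sub>R x + t *\<^sub>R y) \<le> ereal (1 - t) * f x + ereal t * f y)"

definition lsc :: "('a::topological_space \<Rightarrow> ereal) \<Rightarrow> bool" where
  "lsc f \<longleftrightarrow> (\<forall>c::real. closed {x. f x \<le> ereal c})"

definition Gamma0 :: "('a::real_normed_vector \<Rightarrow> ereal) \<Rightarrow> bool" where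
  "Gamma0 f \<longleftrightarrow> proper_fun f \<and> econvex f \<and> lsc f"

definition Prox :: "real \<Rightarrow> ('a::real_normed_vector \<Rightarrow> ereal) \<Rightarrow> 'a \<Rightarrow> 'a set" where
  "Prox \<gamma> g x = {y. \<forall>z. g y + ereal ((norm (x - y))\<^sup>2 / (2 * \<gamma>))
                          \<le> g z + ereal ((norm (x - z))\<^sup>2 / (2 * \<gamma>))}"

definition set_inv :: "('a \<Rightarrow> 'b set) \<Rightarrow> 'b \<Rightarrow> 'a set" where
  "set_inv T y = {x. y \<in> T x}"

definition plus_scaled_id :: "('a \<Rightarrow> 'a set) \<Rightarrow> real \<Rightarrow> 'a::real_vector \<Rightarrow> 'a set" where
  "plus_scaled_id T \<delta> x = (\<lambda>u. u + \<delta> *\<^sub>R x) ` T x"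

end

theory Submission
  imports Defs
begin

lemma lower_linear:
  fixes r :: "'a::real_normed_vector \<Rightarrow> real"
  assumes conv: "\<forall>a\<in>D. \<forall>b\<in>D. \<forall>t. 0\<le>t \<and> t\<le>1 \<longrightarrow> (1-t)*\<^sub>R a + t*\<^sub>R b \<in> D \<and> r ((1-t)*\<^sub>R a + t*\<^sub>R b) \<le> (1-t)*r a + t*r b"
    and cl: "\<forall>c. closed {y\<in>D. r y \<le> c}" and y0: "y0 \<in> D"
  shows "\<exists>K\<ge>0. \<forall>y\<in>D. r y \<ge> r y0 - 1 - K * norm (y - y0)"
proof -
  have "open (- {y\<in>D. r y \<le> r y0 - 1})" using cl by auto
  moreover have "y0 \<in> - {y\<in>D. r y \<le> r y0 - 1}" by simp
  ultimately obtain e where e: "e>0" and eb: "\<forall>y. dist y y0 < e \<longrightarrow> y \<in> - {y\<in>D. r y \<le> r y0 - 1}"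
    unfolding open_dist by blast
  show ?thesis
  proof (intro exI[of _ "2/e"] conjI ballI)
    show "0 \<le> 2/e" using e by simp
    fix y assume yD: "y \<in> D"
    show "r y0 - 1 - 2/e * norm (y - y0) \<le> r y"
    proof (cases "norm (y - y0) < e")
      case True
      then have "r y > r y0 - 1" using eb yD by (auto simp: dist_norm)
      moreover have "0 \<le> 2/e * norm (y - y0)" using e by simp
      ultimately show ?thesis by linarith
    next
      case False
      define n where "n = norm (y - y0)"
      have n: "n \<ge> e" using False n_def by simp
      define t where "t = e / (2*n)"
      have t0: "0 < t" using e n by (simp add: t_def)
      have t1: "t \<le> 1" using e n by (simp add: t_def field_simps)
      define z where "z = (1-t)*\<^sub>R y0 + t*\<^sub>R y"
      have zD: "z \<in> D" and rz: "r z \<le> (1-t)*r y0 + t*r y" using conv y0 yD t0 t1 z_def by auto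
      have "z - y0 = t *\<^sub>R (y - y0)" by (simp add: z_def algebra_simps)
      then have "norm (z - y0) = t * n" using t0 n_def by simp
      also have "\<dots> = e/2" using e n by (simp add: t_def field_simps)
      finally have "dist z y0 < e" using e by (simp add: dist_norm)
      then have "r z > r y0 - 1" using eb zD by auto
      then have "t * r y > t * r y0 - 1" using rz by (simp add: algebra_simps)
      then have "r y > r y0 - 1/t" using t0 by (simp add: field_simps)
      moreover have "1/t = 2/e * n" using e n by (simp add: t_def field_simps)
      ultimately show ?thesis using n_def by simp
    qed
  qed
qed

lemma small_t:
  fixes a c :: real
  assumes h: "\<forall>t. 0<t \<and> t\<le>1 \<longrightarrow> 0 \<le> t*a + c*t^2" and c: "c \<ge> 0"
  shows "0 \<le> a"
proof (rule ccontr)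
  assume a: "\<not> 0 \<le> a"
  define t where "t = min 1 (-a/(2*c+1))"
  have "2*c+1 > 0" using c by simp
  then have "-a/(2*c+1) > 0" using a by (intro divide_pos_pos) auto
  then have t0: "0 < t" by (simp add: t_def)
  have t1: "t \<le> 1" by (simp add: t_def)
  have "0 \<le> t*a + c*t^2" using h t0 t1 by blast
  then have "0 \<le> t*(a + c*t)" by (simp add: power2_eq_square algebra_simps)
  then have "0 \<le> a + c*t" using t0 by (simp add: zero_le_mult_iff)
  moreover have "c*t \<le> c*(-a/(2*c+1))" using c by (intro mult_left_mono) (auto simp: t_def)
  moreover have "c*(-a/(2*c+1)) \<le> -a/2" using a c by (simp add: field_simps)
  ultimately show False using a by linarith
qed

lemma mid_norm:
  fixes a b :: "'a::real_inner"
  shows "(norm ((1-1/2)*\<^sub>R a + (1/2)*\<^sub>R b))^2 = ((norm a)^2 + (norm b)^2)/2 - (norm (a - b))^2/4"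
  by (simp add: power2_norm_eq_inner inner_add inner_diff inner_commute algebra_simps) (simp add: field_simps)

lemma conv_norm:
  fixes y z v :: "'a::real_inner"
  shows "d/2*(norm ((1-t)*\<^sub>R y + t*\<^sub>R z))^2 - inner v ((1-t)*\<^sub>R y + t*\<^sub>R z) - (d/2*(norm y)^2 - inner v y)
     = t*(d * inner y (z - y) - inner v (z - y)) + d/2*t^2*(norm (z - y))^2"
  apply (simp add: power2_norm_eq_inner inner_add inner_diff inner_commute inner_scaleR_left inner_scaleR_right)
  apply (simp add: algebra_simps power2_eq_square)
  apply (simp add: field_simps)
  done

lemma sq_diff:
  fixes x y :: "'a::real_inner"
  shows "(norm (x - y))^2 = (norm x)^2 - 2 * inner x y + (norm y)^2"
  by (simp add: power2_norm_eq_inner inner_diff inner_commute algebra_simps)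


lemma exists_min:
  fixes r :: "'a::{real_inner,complete_space} \<Rightarrow> real"
  assumes conv: "\<forall>a\<in>D. \<forall>b\<in>D. \<forall>t. 0\<le>t \<and> t\<le>1 \<longrightarrow> (1-t)*\<^sub>R a + t*\<^sub>R b \<in> D \<and> r ((1-t)*\<^sub>R a + t*\<^sub>R b) \<le> (1-t)*r a + t*r b"
    and cl: "\<forall>c. closed {y\<in>D. r y \<le> c}" and ne: "D \<noteq> {}" and d: "d > 0"
  shows "\<exists>y\<in>D. \<forall>z\<in>D. r y + d/2*(norm y)^2 - inner u y \<le> r z + d/2*(norm z)^2 - inner u z"
proof -
  define q where "q y = d/2*(norm y)^2 - inner u y" for y
  define G where "G y = r y + q y" for y
  obtain y0 where y0: "y0 \<in> D" using ne by blast
  obtain K where K: "K \<ge> 0" "\<forall>y\<in>D. r y \<ge> r y0 - 1 - K * norm (y - y0)"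
    using lower_linear[OF conv cl y0] by blast
  define B where "B = r y0 - 1 - K * norm y0 - (K + norm u)^2/(2*d)"
  have lb: "G y \<ge> B" if yD: "y \<in> D" for y
  proof -
    define n where "n = norm y"
    have "norm (y - y0) \<le> n + norm y0" unfolding n_def by (rule norm_triangle_ineq4)
    then have "K * norm (y - y0) \<le> K * (n + norm y0)" using K by (intro mult_left_mono) auto
    then have 1: "r y \<ge> r y0 - 1 - K * (n + norm y0)" using K yD by force
    have 2: "inner u y \<le> norm u * n" unfolding n_def by (rule norm_cauchy_schwarz)
    have "0 \<le> (d*n - (K + norm u))^2" by simp
    then have "0 \<le> d^2*n^2 - 2*d*n*(K + norm u) + (K + norm u)^2" by (simp add: power2_eq_square algebra_simps)
    then have "0 \<le> (d^2*n^2 - 2*d*n*(K + norm u) + (K + norm u)^2)/(2*d)" using d by simp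
    then have 3: "d/2*n^2 - (K + norm u)*n \<ge> -((K + norm u)^2/(2*d))" using d
      by (simp add: field_simps power2_eq_square)
    show ?thesis unfolding G_def q_def B_def using 1 2 3 n_def by (simp add: algebra_simps)
  qed
  define m where "m = Inf (G ` D)"
  have bdd: "bdd_below (G ` D)" using lb by (intro bdd_belowI2[of D B G]) auto
  have mle: "m \<le> G y" if "y \<in> D" for y unfolding m_def using bdd that by (simp add: cInf_lower)
  have "\<forall>n. \<exists>y\<in>D. G y < m + 1/Suc n"
  proof
    fix n :: nat
    have "Inf (G ` D) < m + 1/Suc n" unfolding m_def by simp
    then show "\<exists>y\<in>D. G y < m + 1/Suc n" using ne by (simp add: cInf_less_iff bdd)
  qed
  then obtain ys where ys: "\<And>n. ys n \<in> D" "\<And>n. G (ys n) < m + 1/Suc n" by metis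
  have mid: "d/8*(norm (a - b))^2 \<le> (G a + G b)/2 - m" if "a \<in> D" "b \<in> D" for a b
  proof -
    define c where "c = (1-1/2)*\<^sub>R a + (1/2::real)*\<^sub>R b"
    have h: "(1-1/2)*\<^sub>R a + (1/2::real)*\<^sub>R b \<in> D \<and> r ((1-1/2)*\<^sub>R a + (1/2::real)*\<^sub>R b) \<le> (1-1/2)*r a + (1/2)*r b"
      using that by (intro conv[rule_format]) auto
    have cD: "c \<in> D" and rc: "r c \<le> (1-1/2)*r a + (1/2)*r b" using h unfolding c_def by blast+
    have "m \<le> G c" using mle cD by simp
    moreover have "q c = (q a + q b)/2 - d/8*(norm (a - b))^2"
      unfolding q_def c_def mid_norm by (simp add: inner_add inner_diff field_simps)
    ultimately show ?thesis using rc unfolding G_def by (simp add: field_simps)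
  qed
  have "Cauchy ys"
  proof (rule metric_CauchyI)
    fix e :: real assume e: "e > 0"
    obtain N :: nat where N: "8/(d*e^2) < N" using reals_Archimedean2 by blast
    have "8/(d*e^2) > 0" using d e by simp
    then have "real N > 0" using N by linarith
    then have NP: "N > 0" by simp
    have "dist (ys a) (ys b) < e" if "a \<ge> N" "b \<ge> N" for a b
    proof -
      have "d/8*(norm (ys a - ys b))^2 \<le> (G (ys a) + G (ys b))/2 - m" using mid ys by blast
      also have "\<dots> < (1/Suc a + 1/Suc b)/2"
      proof -
        obtain p1 p2 where p: "p1 = 1/real (Suc a)" "p2 = 1/real (Suc b)" by blast
        have "G (ys a) < m + p1" "G (ys b) < m + p2" using ys(2) p by auto
        then have "(G (ys a) + G (ys b))/2 - m < (p1 + p2)/2" by (simp add: field_simps)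
        then show ?thesis using p by simp
      qed
      also have "\<dots> \<le> (1/N + 1/N)/2"
      proof -
        have "1/real (Suc a) \<le> 1/N" "1/real (Suc b) \<le> 1/N" using that NP by (auto simp: field_simps)
        then show ?thesis by simp
      qed
      finally have "(norm (ys a - ys b))^2 < 8/(d*N)" using d NP by (simp add: field_simps)
      also have "8/(d*N) < e^2" using N d e NP by (simp add: field_simps)
      finally have "(norm (ys a - ys b))^2 < e^2" .
      then have "norm (ys a - ys b) < e" using e by (simp add: power_less_imp_less_base)
      then show ?thesis by (simp add: dist_norm)
    qed
    then show "\<exists>M. \<forall>a\<ge>M. \<forall>b\<ge>M. dist (ys a) (ys b) < e" by blast
  qed
  then obtain ystar where lim: "ys \<longlonglongrightarrow> ystar" using Cauchy_convergent_iff convergent_def by blast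
  have qlim: "(\<lambda>n. q (ys n)) \<longlonglongrightarrow> q ystar" unfolding q_def by (intro tendsto_intros lim)
  have key: "ystar \<in> D \<and> G ystar \<le> m + 2*e" if e: "e > 0" for e
  proof -
    define c where "c = m - q ystar + 2*e"
    have ev1: "eventually (\<lambda>n. dist (q (ys n)) (q ystar) < e) sequentially"
      using qlim e by (simp add: tendsto_iff)
    have ev2: "eventually (\<lambda>n. 1/Suc n < e) sequentially"
    proof -
      obtain N :: nat where "1/e < N" using reals_Archimedean2 by blast
      then have N1: "1 < e * real N" using e by (simp add: field_simps)
      have "\<forall>n\<ge>N. 1/Suc n < e"
      proof (intro allI impI)
        fix n assume "n \<ge> N"
        then have "e * real N \<le> e * real n" using e by simp
        then have "1 < e + e * real n" using N1 e by linarith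
        then show "1/Suc n < e" by (simp add: field_simps)
      qed
      then show ?thesis by (auto simp: eventually_sequentially)
    qed
    have "eventually (\<lambda>n. ys n \<in> {y\<in>D. r y \<le> c}) sequentially"
      using ev1 ev2
    proof eventually_elim
      case (elim n)
      have "r (ys n) = G (ys n) - q (ys n)" by (simp add: G_def)
      also have "\<dots> \<le> c" using elim ys(2)[of n] by (simp add: c_def dist_real_def abs_less_iff)
      finally show ?case using ys(1) by simp
    qed
    then have "ystar \<in> {y\<in>D. r y \<le> c}" using cl lim by (intro Lim_in_closed_set) auto
    then show ?thesis by (simp add: G_def c_def)
  qed
  have yD: "ystar \<in> D" using key[of 1] by simp
  have "G ystar \<le> m"
  proof (rule field_le_epsilon)
    fix e :: real assume "e > 0"
    then show "G ystar \<le> m + e" using key[of "e/2"] by simp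
  qed
  then show ?thesis using yD mle unfolding G_def q_def by force
qed


lemma prox_char:
  fixes g :: "'a::real_normed_vector \<Rightarrow> ereal"
  assumes out: "\<And>z. z \<notin> D \<Longrightarrow> g z = \<infinity>" and inn: "\<And>z. z \<in> D \<Longrightarrow> g z = ereal (h z)" and ne: "y0 \<in> D"
  shows "Prox 1 g x = {y\<in>D. \<forall>z\<in>D. h y + (norm (x - y))^2/2 \<le> h z + (norm (x - z))^2/2}"
proof (intro set_eqI iffI)
  fix y assume y: "y \<in> Prox 1 g x"
  have yD: "y \<in> D"
  proof (rule ccontr)
    assume "y \<notin> D"
    then have "g y + ereal ((norm (x - y))\<^sup>2 / (2 * 1)) = \<infinity>" using out by simp
    moreover have "g y + ereal ((norm (x - y))\<^sup>2 / (2 * 1)) \<le> g y0 + ereal ((norm (x - y0))\<^sup>2 / (2 * 1))"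
      using y unfolding Prox_def by blast
    ultimately show False using inn[OF ne] by simp
  qed
  show "y \<in> {y\<in>D. \<forall>z\<in>D. h y + (norm (x - y))^2/2 \<le> h z + (norm (x - z))^2/2}"
  proof (intro CollectI conjI ballI yD)
    fix z assume "z \<in> D"
    then have "g y + ereal ((norm (x - y))\<^sup>2 / (2 * 1)) \<le> g z + ereal ((norm (x - z))\<^sup>2 / (2 * 1))"
      using y unfolding Prox_def by blast
    then show "h y + (norm (x - y))^2/2 \<le> h z + (norm (x - z))^2/2" using inn yD \<open>z \<in> D\<close> by simp
  qed
next
  fix y assume y: "y \<in> {y\<in>D. \<forall>z\<in>D. h y + (norm (x - y))^2/2 \<le> h z + (norm (x - z))^2/2}"
  show "y \<in> Prox 1 g x" unfolding Prox_def
  proof (intro CollectI allI)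
    fix z
    show "g y + ereal ((norm (x - y))\<^sup>2 / (2 * 1)) \<le> g z + ereal ((norm (x - z))\<^sup>2 / (2 * 1))"
    proof (cases "z \<in> D")
      case True then show ?thesis using y inn by simp
    next
      case False then show ?thesis using out by simp
    qed
  qed
qed

lemma set2_char:
  "set_inv (plus_scaled_id (set_inv (Prox 1 \<phi>)) \<delta>) w = {y. y \<in> Prox 1 \<phi> (w - \<delta> *\<^sub>R y)}"
proof (intro set_eqI iffI)
  fix y assume "y \<in> set_inv (plus_scaled_id (set_inv (Prox 1 \<phi>)) \<delta>) w"
  then obtain u where "y \<in> Prox 1 \<phi> u" "w = u + \<delta> *\<^sub>R y"
    unfolding set_inv_def plus_scaled_id_def by auto
  then show "y \<in> {y. y \<in> Prox 1 \<phi> (w - \<delta> *\<^sub>R y)}" by simp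
next
  fix y assume "y \<in> {y. y \<in> Prox 1 \<phi> (w - \<delta> *\<^sub>R y)}"
  then have "w - \<delta> *\<^sub>R y \<in> set_inv (Prox 1 \<phi>) y" by (simp add: set_inv_def)
  then have "w \<in> plus_scaled_id (set_inv (Prox 1 \<phi>)) \<delta> y"
    unfolding plus_scaled_id_def by (rule image_eqI[rotated]) simp
  then show "y \<in> set_inv (plus_scaled_id (set_inv (Prox 1 \<phi>)) \<delta>) w" by (simp add: set_inv_def)
qed


theorem theorem2:
  fixes \<phi> :: "'a::{real_inner, complete_space} \<Rightarrow> ereal"
    and \<delta> :: real
  assumes "Gamma0 (\<lambda>x. \<phi> x + ereal ((norm x)\<^sup>2 / 2))"
    and "\<delta> > 0"
  shows "\<forall>x. \<exists>y. Prox 1 (\<lambda>z. ereal (1 / (\<delta> + 1)) * \<phi> z) x = {y}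
              \<and> set_inv (plus_scaled_id (set_inv (Prox 1 \<phi>)) \<delta>) ((\<delta> + 1) *\<^sub>R x) = {y}"
proof
  fix x :: 'a
  define \<psi> where "\<psi> x = \<phi> x + ereal ((norm x)\<^sup>2 / 2)" for x
  have G0: "Gamma0 \<psi>" using assms(1) unfolding \<psi>_def by simp
  have nm: "\<psi> y \<noteq> -\<infinity>" for y using G0 unfolding Gamma0_def proper_fun_def by blast
  obtain y0 where y0: "\<psi> y0 \<noteq> \<infinity>" using G0 unfolding Gamma0_def proper_fun_def by blast
  have ec: "econvex \<psi>" and ls: "lsc \<psi>" using G0 unfolding Gamma0_def by auto
  define D where "D = {y. \<psi> y \<noteq> \<infinity>}"
  define r where "r y = real_of_ereal (\<psi> y)" for y
  have ne: "y0 \<in> D" using y0 D_def by simp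
  have psiD: "\<psi> y = ereal (r y)" if "y \<in> D" for y
    using that nm[of y] unfolding D_def r_def by (cases "\<psi> y") auto
  have phin: "\<phi> y = ereal (r y - (norm y)^2/2)" if "y \<in> D" for y
    using psiD[OF that] unfolding \<psi>_def by (cases "\<phi> y") auto
  have phout: "\<phi> y = \<infinity>" if "y \<notin> D" for y
    using that nm[of y] unfolding D_def \<psi>_def by (cases "\<phi> y") auto
  have conv: "\<forall>a\<in>D. \<forall>b\<in>D. \<forall>t. 0\<le>t \<and> t\<le>1 \<longrightarrow> (1-t)*\<^sub>R a + t*\<^sub>R b \<in> D \<and> r ((1-t)*\<^sub>R a + t*\<^sub>R b) \<le> (1-t)*r a + t*r b"
  proof (intro ballI allI impI)
    fix a b and t :: real assume a: "a \<in> D" and b: "b \<in> D" and t: "0 \<le> t \<and> t \<le> 1"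
    have "\<psi> ((1-t)*\<^sub>R a + t*\<^sub>R b) \<le> ereal (1 - t) * \<psi> a + ereal t * \<psi> b"
      using ec t unfolding econvex_def by blast
    also have "\<dots> = ereal ((1-t)*r a + t*r b)" using psiD a b by simp
    finally have le: "\<psi> ((1-t)*\<^sub>R a + t*\<^sub>R b) \<le> ereal ((1-t)*r a + t*r b)" .
    then have cD: "(1-t)*\<^sub>R a + t*\<^sub>R b \<in> D" unfolding D_def by auto
    show "(1-t)*\<^sub>R a + t*\<^sub>R b \<in> D \<and> r ((1-t)*\<^sub>R a + t*\<^sub>R b) \<le> (1-t)*r a + t*r b"
      using cD le psiD[OF cD] by simp
  qed
  have cl: "\<forall>c. closed {y\<in>D. r y \<le> c}"
  proof
    fix c
    have "{y\<in>D. r y \<le> c} = {y. \<psi> y \<le> ereal c}"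
    proof (intro set_eqI iffI)
      fix y assume "y \<in> {y\<in>D. r y \<le> c}" then show "y \<in> {y. \<psi> y \<le> ereal c}" using psiD by auto
    next
      fix y assume "y \<in> {y. \<psi> y \<le> ereal c}"
      then have yD: "y \<in> D" unfolding D_def by auto
      then show "y \<in> {y\<in>D. r y \<le> c}" using psiD[OF yD] \<open>y \<in> {y. \<psi> y \<le> ereal c}\<close> by simp
    qed
    then show "closed {y\<in>D. r y \<le> c}" using ls unfolding lsc_def by simp
  qed
  define v where "v = (\<delta> + 1) *\<^sub>R x"
  define G where "G y = r y + \<delta>/2*(norm y)^2 - inner v y" for y
  define U where "U y = (\<delta> + 1) *\<^sub>R x - \<delta> *\<^sub>R y" for y
  obtain ys where ysD: "ys \<in> D" and ysm: "\<forall>z\<in>D. G ys \<le> G z"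
    using exists_min[OF conv cl _ assms(2), of v] ne unfolding G_def by blast
  define h1 where "h1 z = (r z - (norm z)^2/2)/(\<delta>+1)" for z
  have S1: "Prox 1 (\<lambda>z. ereal (1 / (\<delta> + 1)) * \<phi> z) x
      = {y\<in>D. \<forall>z\<in>D. h1 y + (norm (x - y))^2/2 \<le> h1 z + (norm (x - z))^2/2}"
  proof (rule prox_char[OF _ _ ne])
    fix z assume "z \<notin> D" then show "ereal (1 / (\<delta> + 1)) * \<phi> z = \<infinity>" using phout assms(2) by simp
  next
    fix z assume "z \<in> D" then show "ereal (1 / (\<delta> + 1)) * \<phi> z = ereal (h1 z)"
      using phin unfolding h1_def by simp
  qed
  have A1: "(h1 y + (norm (x - y))^2/2 \<le> h1 z + (norm (x - z))^2/2) \<longleftrightarrow> G y \<le> G z" for y z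
  proof -
    have id: "(\<delta>+1) * (h1 w + (norm (x - w))^2/2) = G w + (\<delta>+1)/2 * (norm x)^2" for w
      using assms(2) unfolding h1_def G_def v_def sq_diff[of x w]
      by (simp add: field_simps inner_add_left)
    have "(h1 y + (norm (x - y))^2/2 \<le> h1 z + (norm (x - z))^2/2) \<longleftrightarrow>
          (\<delta>+1) * (h1 y + (norm (x - y))^2/2) \<le> (\<delta>+1) * (h1 z + (norm (x - z))^2/2)"
      using assms(2) by simp
    then show ?thesis unfolding id by simp
  qed
  define h2 where "h2 z = r z - (norm z)^2/2" for z
  have S2: "set_inv (plus_scaled_id (set_inv (Prox 1 \<phi>)) \<delta>) ((\<delta> + 1) *\<^sub>R x)
     = {y. y \<in> D \<and> (\<forall>z\<in>D. h2 y + (norm (U y - y))^2/2 \<le> h2 z + (norm (U y - z))^2/2)}"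
  proof -
    have "Prox 1 \<phi> w = {y\<in>D. \<forall>z\<in>D. h2 y + (norm (w - y))^2/2 \<le> h2 z + (norm (w - z))^2/2}" for w
      by (rule prox_char[OF _ _ ne]) (auto simp: phout phin h2_def)
    then show ?thesis unfolding set2_char U_def by auto
  qed
  have A2: "(h2 y + (norm (u - y))^2/2 \<le> h2 z + (norm (u - z))^2/2) \<longleftrightarrow> r y - inner u y \<le> r z - inner u z" for u y z
    unfolding h2_def sq_diff[of u y] sq_diff[of u z] by (simp add: field_simps) linarith
  have Q: "r y - inner (U y) y \<le> r z - inner (U y) z" if yD: "y \<in> D" and ym: "\<forall>z\<in>D. G y \<le> G z" and zD: "z \<in> D" for y z
  proof -
    define a where "a = (r z - r y) - inner (U y) (z - y)"
    define c where "c = \<delta>/2 * (norm (z - y))^2"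
    have "0 \<le> a"
    proof (rule small_t)
      show "0 \<le> c" using assms(2) unfolding c_def by simp
      show "\<forall>t. 0 < t \<and> t \<le> 1 \<longrightarrow> 0 \<le> t * a + c * t\<^sup>2"
      proof (intro allI impI)
        fix t :: real assume t: "0 < t \<and> t \<le> 1"
        define yt where "yt = (1-t)*\<^sub>R y + t*\<^sub>R z"
        have ytD: "yt \<in> D" and ryt: "r yt \<le> (1-t)*r y + t*r z" using conv yD zD t yt_def by auto
        define P where "P = inner v (z - y)"
        define Qq where "Qq = inner y (z - y)"
        define N where "N = (norm (z - y))^2"
        have "G y \<le> G yt" using ym ytD by simp
        then have g: "r y + \<delta>/2*(norm y)^2 - inner v y \<le> r yt + \<delta>/2*(norm yt)^2 - inner v yt"
          unfolding G_def .
        have e: "\<delta>/2*(norm yt)^2 - inner v yt - (\<delta>/2*(norm y)^2 - inner v y)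
           = t*(\<delta> * Qq - P) + \<delta>/2*t^2*N"
          unfolding yt_def P_def Qq_def N_def by (rule conv_norm)
        have "inner (U y) (z - y) = inner v (z - y) - \<delta> * inner y (z - y)"
          unfolding U_def v_def by (simp add: inner_diff_left)
        then have av: "a = (r z - r y) - (P - \<delta>*Qq)" unfolding a_def P_def Qq_def by simp
        have k2: "t*a + c*t^2 = t*r z - t*r y + t*(\<delta>*Qq - P) + \<delta>/2*t^2*N"
          unfolding av c_def N_def by (simp add: algebra_simps)
        have ryt': "r yt \<le> r y - t*r y + t*r z" using ryt by (simp add: algebra_simps)
        show "0 \<le> t * a + c * t\<^sup>2" unfolding k2 using g e ryt' by linarith
      qed
    qed
    then show ?thesis unfolding a_def by (simp add: inner_diff_right)
  qed
  have R: "G z \<ge> G y + \<delta>/2 * (norm (z - y))^2" if yD: "y \<in> D" and yq: "\<forall>z\<in>D. r y - inner (U y) y \<le> r z - inner (U y) z" and zD: "z \<in> D" for y z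
  proof -
    have 1: "r y - inner (U y) y \<le> r z - inner (U y) z" using yq zD by blast
    have 2: "inner (U y) w = inner v w - \<delta> * inner y w" for w
      unfolding U_def v_def by (simp add: inner_diff_left)
    show ?thesis using 1 unfolding G_def 2 sq_diff[of z y]
      by (simp add: algebra_simps inner_commute power2_norm_eq_inner)
  qed
  have uniq: "y = ys" if yD: "y \<in> D" and ym: "\<forall>z\<in>D. G y \<le> G z" for y
  proof -
    have "G y \<ge> G ys + \<delta>/2 * (norm (y - ys))^2"
      using R[OF ysD _ yD] Q[OF ysD ysm] by blast
    moreover have "G y \<le> G ys" using ym ysD by blast
    ultimately have "\<delta>/2 * (norm (y - ys))^2 \<le> 0" by linarith
    then have "(norm (y - ys))^2 \<le> 0" using assms(2)
      by (simp add: mult_le_0_iff)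
    then show ?thesis by simp
  qed
  show "\<exists>y. Prox 1 (\<lambda>z. ereal (1 / (\<delta> + 1)) * \<phi> z) x = {y}
              \<and> set_inv (plus_scaled_id (set_inv (Prox 1 \<phi>)) \<delta>) ((\<delta> + 1) *\<^sub>R x) = {y}"
  proof (intro exI conjI)
    show "Prox 1 (\<lambda>z. ereal (1 / (\<delta> + 1)) * \<phi> z) x = {ys}"
      unfolding S1 A1 using ysD ysm uniq by blast
    have "(y \<in> D \<and> (\<forall>z\<in>D. h2 y + (norm (U y - y))^2/2 \<le> h2 z + (norm (U y - z))^2/2)) \<longleftrightarrow> y = ys" for y
    proof
      assume h: "y \<in> D \<and> (\<forall>z\<in>D. h2 y + (norm (U y - y))^2/2 \<le> h2 z + (norm (U y - z))^2/2)"
      then have "\<forall>z\<in>D. r y - inner (U y) y \<le> r z - inner (U y) z" using A2 by blast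
      then have "\<forall>z\<in>D. G y \<le> G z" using R h assms(2)
        by (smt (verit) zero_le_power2 mult_nonneg_nonneg divide_nonneg_pos)
      then show "y = ys" using uniq h by blast
    next
      assume "y = ys"
      then show "y \<in> D \<and> (\<forall>z\<in>D. h2 y + (norm (U y - y))^2/2 \<le> h2 z + (norm (U y - z))^2/2)"
        using ysD Q[OF ysD ysm] A2 by blast
    qed
    then show "set_inv (plus_scaled_id (set_inv (Prox 1 \<phi>)) \<delta>) ((\<delta> + 1) *\<^sub>R x) = {ys}"
      unfolding S2 by blast
  qed
qed

end
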